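(* Let $A\in\mathbf{bal}$ and let $e:A\to A^\sigma$ be its canonical extension. Then for every basic algebra $C$ and every $\mathbf{bal}$-morphism $\alpha:A\to C$ there is a unique normal homomorphism $\gamma:A^\sigma\to C$ with $\gamma\circ e=\alpha$. Hence $A\mapsto A^\sigma$ is a reflector and $\mathbf{balg}$ is a (non-full) reflective subcategory of $\mathbf{bal}$.
   Context: An $\ell$-algebra is a commutative unital $\mathbb{R}$-algebra with a lattice order compatible with addition, with products and nonnegative scalar multiples of nonnegative elements nonnegative. It is bounded if each $a\le n\cdot1$ for some $n\in\mathbb{N}$, archimedean if $n\cdot a\le b$ for all $n$ implies $a\le0$. $\mathbf{bal}$ is the category of bounded archimedean $\ell$-algebras and unital $\ell$-algebra homomorphisms. An $\ell$-algebra is Dedekind complete if every subset bounded above has a least upper bound. The idempotents $\mathrm{Id}(A)$ form a boolean algebra with $e\vee f=e+f-ef$, $e\wedge f=ef$, $\neg e=1-e$. A basic algebra is a Dedekind complete $A\in\mathbf{bal}$ with $\mathrm{Id}(A)$ atomic. A normal homomorphism between basic algebras is a $\mathbf{bal}$-morphism preserving all existing joins and meets; $\mathbf{balg}$ is the category of basic algebras and normal homomorphisms. A canonical extension of $A\in\mathbf{bal}$ is a basic algebra $A^\sigma$ with a $\mathbf{bal}$-monomorphism $e:A\to A^\sigma$ such that (Density) every element of $A^\sigma$ is a join of meets of elements of $e[A]$, and (Compactness) for $S,T\subseteq A$ and real $\varepsilon>0$, $\bigwedge e[S]+\varepsilon\le\bigvee e[T]$ implies $\bigwedge e[S']\le\bigvee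 e[T']$ for some finite $S'\subseteq S$, $T'\subseteq T$. Every $A\in\mathbf{bal}$ has a canonical extension, unique up to isomorphism, namely the algebra $B(Y_A)$ of all bounded real functions on the set $Y_A$ of maximal $\ell$-ideals of $A$, with $e(a)(M)=r$ where $a+M=r+M$. *)

theory Defs
  imports Complex_Main "HOL-Library.Lattice_Algebras"
begin

class bal = comm_ring_1 + real_algebra_1 + lattice_ab_group_add +
  assumes bal_mult_nonneg: "0 \<le> a \<Longrightarrow> 0 \<le> b \<Longrightarrow> 0 \<le> a * b"
  and bal_scaleR_nonneg: "0 \<le> r \<Longrightarrow> 0 \<le> a \<Longrightarrow> 0 \<le> r *\<^sub>R a"
  and bal_bounded: "\<exists>n::nat. a \<le> of_nat n * 1"
  and bal_archimedean: "(\<And>n::nat. of_nat n * a \<le> b) \<Longrightarrow> a \<le> 0"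

definition is_join :: "'a::order set \<Rightarrow> 'a \<Rightarrow> bool" where
  "is_join S x \<longleftrightarrow> (\<forall>s\<in>S. s \<le> x) \<and> (\<forall>y. (\<forall>s\<in>S. s \<le> y) \<longrightarrow> x \<le> y)"

definition is_meet :: "'a::order set \<Rightarrow> 'a \<Rightarrow> bool" where
  "is_meet S x \<longleftrightarrow> (\<forall>s\<in>S. x \<le> s) \<and> (\<forall>y. (\<forall>s\<in>S. y \<le> s) \<longrightarrow> y \<le> x)"

text \<open>Idempotents form a boolean algebra with meet e*f, bottom 0; its order is
  e \<le> f iff e*f = e.  Atoms and atomicity w.r.t. this boolean algebra.\<close>

definition idempotents :: "'a::ring_1 set" where
  "idempotents = {e. e * e = e}"

definition idem_atom :: "'a::ring_1 \<Rightarrow> bool" where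
  "idem_atom a \<longleftrightarrow> a \<in> idempotents \<and> a \<noteq> 0 \<and>
     (\<forall>f\<in>idempotents. f * a = f \<longrightarrow> f = 0 \<or> f = a)"

class basic = bal +
  assumes basic_dedekind_complete:
    "S \<noteq> {} \<Longrightarrow> (\<exists>u. \<forall>s\<in>S. s \<le> u) \<Longrightarrow>
     \<exists>x. (\<forall>s\<in>S. s \<le> x) \<and> (\<forall>y. (\<forall>s\<in>S. s \<le> y) \<longrightarrow> x \<le> y)"
  and basic_idem_atomic:
    "e * e = e \<Longrightarrow> e \<noteq> 0 \<Longrightarrow>
     \<exists>a. (a * a = a \<and> a \<noteq> 0 \<and> (\<forall>f. f * f = f \<and> f * a = f \<longrightarrow> f = 0 \<or> f = a))
         \<and> a * e = a"

lemma basic_dedekind_complete':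
  "S \<noteq> {} \<Longrightarrow> (\<exists>u. \<forall>s\<in>S. s \<le> u) \<Longrightarrow> \<exists>x::'a::basic. is_join S x"
  unfolding is_join_def by (rule basic_dedekind_complete)

definition bal_hom :: "('a::bal \<Rightarrow> 'b::bal) \<Rightarrow> bool" where
  "bal_hom f \<longleftrightarrow>
     (\<forall>x y. f (x + y) = f x + f y) \<and>
     (\<forall>x y. f (x * y) = f x * f y) \<and>
     (\<forall>r x. f (r *\<^sub>R x) = r *\<^sub>R f x) \<and>
     f 1 = 1 \<and>
     (\<forall>x y. f (sup x y) = sup (f x) (f y)) \<and>
     (\<forall>x y. f (inf x y) = inf (f x) (f y))"

definition normal_hom :: "('a::basic \<Rightarrow> 'b::basic) \<Rightarrow> bool" where
  "normal_hom f \<longleftrightarrow> bal_hom f \<and>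
     (\<forall>S x. is_join S x \<longrightarrow> is_join (f ` S) (f x)) \<and>
     (\<forall>S x. is_meet S x \<longrightarrow> is_meet (f ` S) (f x))"

definition canonical_extension :: "('a::bal \<Rightarrow> 'b::basic) \<Rightarrow> bool" where
  "canonical_extension e \<longleftrightarrow>
     bal_hom e \<and> inj e \<and>
     \<comment> \<open>Density: every element is a join of meets of elements of e[A]\<close>
     (\<forall>x::'b. \<exists>\<S>::'a set set.
        (\<forall>S\<in>\<S>. \<exists>m. is_meet (e ` S) m) \<and>
        is_join {m. \<exists>S\<in>\<S>. is_meet (e ` S) m} x) \<and>
     \<comment> \<open>Compactness\<close>
     (\<forall>(S::'a set) (T::'a set) (\<epsilon>::real) m j.
        \<epsilon> > 0 \<longrightarrow> is_meet (e ` S) m \<longrightarrow> is_join (e ` T) j \<longrightarrow> m + of_real \<epsilon> \<le> j \<longrightarrow>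
        (\<exists>S' T' m' j'. finite S' \<and> S' \<subseteq> S \<and> finite T' \<and> T' \<subseteq> T \<and>
           is_meet (e ` S') m' \<and> is_join (e ` T') j' \<and> m' \<le> j'))"

end

theory Submission
  imports Defs
begin

lemma bal_one_ge0: "0 \<le> (1::'a::bal)"
proof -
  obtain n::nat where "-1 \<le> of_nat n * (1::'a)" using bal_bounded by blast
  hence "-1 + 1 \<le> (of_nat n + 1 :: 'a)" by (intro add_right_mono) simp
  hence "0 \<le> (of_nat n + 1 :: 'a)" by simp
  hence h: "0 \<le> real (Suc n) *\<^sub>R (1::'a)" by (simp add: scaleR_conv_of_real add.commute)
  have "0 \<le> (1 / real (Suc n)) *\<^sub>R (real (Suc n) *\<^sub>R (1::'a))"
    by (rule bal_scaleR_nonneg) (use h in auto)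
  thus ?thesis by simp
qed

lemma bal_mult_left_mono: "0 \<le> (c::'a::bal) \<Longrightarrow> a \<le> b \<Longrightarrow> c * a \<le> c * b"
proof -
  assume "0 \<le> c" "a \<le> b"
  hence "0 \<le> c * (b - a)" by (intro bal_mult_nonneg) auto
  thus ?thesis by (simp add: algebra_simps)
qed

lemma bal_mult_right_mono: "0 \<le> (c::'a::bal) \<Longrightarrow> a \<le> b \<Longrightarrow> a * c \<le> b * c"
  using bal_mult_left_mono[of c a b] by (simp add: mult.commute)

lemma bal_scaleR_mono: "0 \<le> r \<Longrightarrow> (a::'a::bal) \<le> b \<Longrightarrow> r *\<^sub>R a \<le> r *\<^sub>R b"
proof -
  assume "0 \<le> r" "a \<le> b"
  hence "0 \<le> r *\<^sub>R (b - a)" by (intro bal_scaleR_nonneg) auto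
  thus ?thesis by (simp add: algebra_simps)
qed

lemma bal_scaleR_mono2: "r \<le> s \<Longrightarrow> 0 \<le> (a::'a::bal) \<Longrightarrow> r *\<^sub>R a \<le> s *\<^sub>R a"
proof -
  assume "r \<le> s" "0 \<le> a"
  hence "0 \<le> (s - r) *\<^sub>R a" by (intro bal_scaleR_nonneg) auto
  thus ?thesis by (simp add: algebra_simps)
qed

lemma bal_bound: "\<exists>N::real. N \<ge> 1 \<and> (x::'a::bal) \<le> N *\<^sub>R 1 \<and> - (N *\<^sub>R 1) \<le> x"
proof -
  obtain n::nat where n: "x \<le> of_nat n * 1" using bal_bounded by blast
  obtain m::nat where m: "-x \<le> of_nat m * 1" using bal_bounded by blast
  define N where "N = real n + real m + 1"
  have "x \<le> real n *\<^sub>R 1" using n by (simp add: scaleR_conv_of_real)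
  also have "\<dots> \<le> N *\<^sub>R (1::'a)" by (rule bal_scaleR_mono2) (auto simp: N_def bal_one_ge0)
  finally have 1: "x \<le> N *\<^sub>R 1" .
  have "-x \<le> real m *\<^sub>R 1" using m by (simp add: scaleR_conv_of_real)
  also have "\<dots> \<le> N *\<^sub>R (1::'a)" by (rule bal_scaleR_mono2) (auto simp: N_def bal_one_ge0)
  finally have 2: "- (N *\<^sub>R 1) \<le> x" by (simp add: minus_le_iff)
  show ?thesis using 1 2 by (intro exI[of _ N]) (auto simp: N_def)
qed

lemma bal_arch: "(\<And>n::nat. real n *\<^sub>R (a::'a::bal) \<le> b) \<Longrightarrow> a \<le> 0"
  by (rule bal_archimedean) (simp add: scaleR_conv_of_real)

lemma bal_arch2: "0 \<le> (b::'a::bal) \<Longrightarrow> (\<And>n::nat. real (Suc n) *\<^sub>R a \<le> b) \<Longrightarrow> a \<le> 0"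
  apply (rule bal_arch[of a b])
  subgoal for n by (cases n) auto
  done


lemma bal_scaleR_inf_le: "0 < r \<Longrightarrow> inf (r *\<^sub>R a) (r *\<^sub>R b) \<le> r *\<^sub>R inf (a::'a::bal) b"
proof -
  assume r: "0 < r"
  have "inverse r *\<^sub>R inf (r *\<^sub>R a) (r *\<^sub>R b) \<le> inverse r *\<^sub>R (r *\<^sub>R a)"
    by (rule bal_scaleR_mono) (use r in auto)
  moreover have "inverse r *\<^sub>R inf (r *\<^sub>R a) (r *\<^sub>R b) \<le> inverse r *\<^sub>R (r *\<^sub>R b)"
    by (rule bal_scaleR_mono) (use r in auto)
  ultimately have "inverse r *\<^sub>R inf (r *\<^sub>R a) (r *\<^sub>R b) \<le> inf a b" using r by simp
  hence "r *\<^sub>R (inverse r *\<^sub>R inf (r *\<^sub>R a) (r *\<^sub>R b)) \<le> r *\<^sub>R inf a b"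
    by (rule bal_scaleR_mono[rotated]) (use r in auto)
  thus ?thesis using r by simp
qed

lemma bal_disj_scale: "inf a b = 0 \<Longrightarrow> 0 \<le> c \<Longrightarrow> inf (c * a) (b::'a::bal) = 0"
proof -
  assume ab: "inf a b = 0" and c: "0 \<le> c"
  have a: "0 \<le> a" using ab by (metis inf.cobounded1)
  have b: "0 \<le> b" using ab by (metis inf.cobounded2)
  obtain N where N: "N \<ge> 1" "c \<le> N *\<^sub>R 1" using bal_bound[of c] by blast
  have "c * a \<le> (N *\<^sub>R 1) * a" by (rule bal_mult_right_mono[OF a N(2)])
  hence 1: "c * a \<le> N *\<^sub>R a" by simp
  have "b \<le> N *\<^sub>R b" using bal_scaleR_mono2[of 1 N b] N b by simp
  hence "inf (c * a) b \<le> inf (N *\<^sub>R a) (N *\<^sub>R b)" using 1 by (meson inf_mono)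
  also have "\<dots> \<le> N *\<^sub>R inf a b" by (rule bal_scaleR_inf_le) (use N in auto)
  finally have "inf (c * a) b \<le> 0" using ab by simp
  moreover have "0 \<le> inf (c * a) b" using bal_mult_nonneg[OF c a] b by simp
  ultimately show ?thesis by simp
qed

lemma bal_disj_scale2: "inf a b = 0 \<Longrightarrow> 0 \<le> c \<Longrightarrow> inf a (c * (b::'a::bal)) = 0"
  using bal_disj_scale[of b a c] by (simp add: inf.commute)

lemma bal_disj_mult: "inf a b = 0 \<Longrightarrow> a * (b::'a::bal) = 0"
proof -
  assume ab: "inf a b = 0"
  have b: "0 \<le> b" using ab by (metis inf.cobounded2)
  have a: "0 \<le> a" using ab by (metis inf.cobounded1)
  have "inf (b * a) b = 0" by (rule bal_disj_scale[OF ab b])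
  hence "inf (b * a) (a * b) = 0" by (rule bal_disj_scale2[OF _ a])
  thus ?thesis by (simp add: mult.commute)
qed

lemma bal_pprt_nprt_disj: "inf (pprt x) (- nprt x) = (0::'a::bal)"
proof -
  have "pprt x + nprt x = x" by (simp add: prts[symmetric])
  have "inf (pprt x) (- nprt x) = inf (sup x 0) (sup (-x) 0)"
    by (simp add: pprt_def nprt_def neg_inf_eq_sup)
  also have "\<dots> = 0"
  proof -
    have e: "sup x 0 + inf x 0 = x + 0" using add_eq_inf_sup[of x 0] by simp
    have "inf (sup x 0) (sup (-x) 0) = inf (sup x 0) (sup x 0 - x)"
    proof -
      have "sup (-x) 0 = - inf x 0" by (simp add: neg_inf_eq_sup)
      also have "\<dots> = sup x 0 - x"
      proof -
        have "inf x 0 = x - sup x 0" using e by (metis add.commute add_diff_cancel_right' add_0_right)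
        thus ?thesis by simp
      qed
      finally show ?thesis by simp
    qed
    also have "\<dots> = sup x 0 + inf 0 (- x)" by (simp add: add_inf_distrib_left)
    also have "\<dots> = sup x 0 - sup 0 x" by (simp add: neg_sup_eq_inf[symmetric])
    also have "\<dots> = 0" by (simp add: sup.commute)
    finally show ?thesis .
  qed
  finally show ?thesis .
qed

lemma bal_sq_nonneg: "0 \<le> x * (x::'a::bal)"
proof -
  let ?p = "pprt x" and ?n = "- nprt x"
  have x: "x = ?p - ?n" using prts[of x] by simp
  have pn: "?p * ?n = 0" by (rule bal_disj_mult[OF bal_pprt_nprt_disj])
  have "x * x = ?p * ?p + ?n * ?n - 2 * (?p * ?n)"
    by (subst x, subst x) (simp add: algebra_simps)
  also have "\<dots> = ?p * ?p + ?n * ?n" using pn by simp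
  also have "0 \<le> \<dots>" by (intro add_nonneg_nonneg bal_mult_nonneg) auto
  finally show ?thesis .
qed

lemma bal_idem_range: "q * q = q \<Longrightarrow> 0 \<le> q \<and> q \<le> (1::'a::bal)"
proof -
  assume q: "q * q = q"
  have "(1 - q) * (1 - q) = 1 - q" using q by (simp add: algebra_simps)
  hence "0 \<le> 1 - q" using bal_sq_nonneg[of "1-q"] by simp
  moreover have "0 \<le> q" using bal_sq_nonneg[of q] q by simp
  ultimately show ?thesis by simp
qed


lemma join_unique: "is_join S x \<Longrightarrow> is_join S y \<Longrightarrow> x = (y::'a::order)"
  unfolding is_join_def by (meson order.antisym)

lemma meet_unique: "is_meet S x \<Longrightarrow> is_meet S y \<Longrightarrow> x = (y::'a::order)"
  unfolding is_meet_def by (meson order.antisym)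

lemma grp1: "(a::'a::ordered_ab_group_add) + s - w \<le> u \<Longrightarrow> s \<le> u - a + w"
  by (simp add: algebra_simps)
lemma grp2: "(x::'a::ordered_ab_group_add) \<le> u - a + w \<Longrightarrow> a + x - w \<le> u"
  by (simp add: algebra_simps)

lemma join_inf_distrib:
  fixes a :: "'a::lattice_ab_group_add"
  assumes "is_join S x" shows "is_join ((\<lambda>s. inf a s) ` S) (inf a x)"
  unfolding is_join_def
proof safe
  fix s assume "s \<in> S" thus "inf a s \<le> inf a x" using assms unfolding is_join_def
    by (meson inf_mono order_refl)
next
  fix u assume u: "\<forall>v\<in>(\<lambda>s. inf a s) ` S. v \<le> u"
  have "\<forall>s\<in>S. s \<le> u - a + sup a x"
  proof
    fix s assume s: "s \<in> S"
    have "inf a s \<le> u" using u s by auto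
    moreover have "inf a s = a + s - sup a s" using add_eq_inf_sup[of a s] by (metis add_diff_cancel_left')
    ultimately have "a + s - sup a s \<le> u" by simp
    hence "s \<le> u - a + sup a s" by (rule grp1)
    also have "sup a s \<le> sup a x" using assms s unfolding is_join_def by (meson sup_mono order_refl)
    finally show "s \<le> u - a + sup a x" by simp
  qed
  hence "x \<le> u - a + sup a x" using assms unfolding is_join_def by blast
  hence "a + x - sup a x \<le> u" by (rule grp2)
  moreover have "inf a x = a + x - sup a x" using add_eq_inf_sup[of a x] by (metis add_diff_cancel_left')
  ultimately show "inf a x \<le> u" by simp
qed

lemma is_join_pair: "is_join {b, c} (sup b (c::'a::lattice))"
  unfolding is_join_def by auto

lemma inf_sup_distrib_lg: "inf a (sup b c) = sup (inf a b) (inf a (c::'a::lattice_ab_group_add))"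
proof -
  have "is_join ((\<lambda>s. inf a s) ` {b, c}) (inf a (sup b c))"
    by (rule join_inf_distrib[OF is_join_pair])
  thus ?thesis using is_join_pair[of "inf a b" "inf a c"] by (simp add: join_unique)
qed

lemma inf_le_convex:
  fixes u v :: "'a::bal"
  assumes "0 \<le> t" "t \<le> 1"
  shows "inf u v \<le> t *\<^sub>R u + (1 - t) *\<^sub>R v"
proof -
  have "inf u v = t *\<^sub>R inf u v + (1 - t) *\<^sub>R inf u v" by (simp add: algebra_simps)
  also have "\<dots> \<le> t *\<^sub>R u + (1 - t) *\<^sub>R v"
    by (intro add_mono bal_scaleR_mono) (use assms in auto)
  finally show ?thesis .
qed

lemma basic_band:
  fixes d :: "'a::basic"
  assumes d0: "0 \<le> d"
  shows "\<exists>f. f * f = f \<and> d * f = d \<and> (\<forall>y. 0 \<le> y \<longrightarrow> inf y d = 0 \<longrightarrow> y * f = 0) \<and>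
    (d \<noteq> 0 \<longrightarrow> f \<noteq> 0)"
proof -
  define X where "X = range (\<lambda>n::nat. inf (real n *\<^sub>R d) (1::'a))"
  have "X \<noteq> {}" unfolding X_def by auto
  moreover have "\<exists>u. \<forall>s\<in>X. s \<le> u" unfolding X_def by (auto intro!: exI[of _ 1])
  ultimately obtain f where f: "is_join X f" using basic_dedekind_complete' by blast
  have hx: "\<And>n. inf (real n *\<^sub>R d) 1 \<le> f" using f unfolding is_join_def X_def by auto
  have f1: "f \<le> 1" using f unfolding is_join_def X_def by auto
  have "inf (0::'a) 1 = 0" using bal_one_ge0 by (rule inf_absorb1)
  hence f0: "0 \<le> f" using hx[of 0] by simp
  define g where "g = 1 - f"
  have g0: "0 \<le> g" using f1 by (simp add: g_def)
  have gd: "inf g d = 0"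
  proof -
    have "real (Suc n) *\<^sub>R inf g d \<le> 1" for n
    proof -
      define t where "t = 1 / real (Suc n)"
      have t: "0 < t" "t \<le> 1" "t * real n = 1 - t" unfolding t_def by (auto simp: field_simps)
      have "g \<le> 1 - inf (real n *\<^sub>R d) 1" unfolding g_def by (rule diff_left_mono[OF hx[of n]])
      also have "\<dots> = sup (1 - real n *\<^sub>R d) 0"
        by (simp add: diff_inf_eq_sup add_sup_distrib_left)
      finally have "inf g d \<le> inf (sup (1 - real n *\<^sub>R d) 0) d" by (meson inf_mono order_refl)
      also have "\<dots> = sup (inf (1 - real n *\<^sub>R d) d) (inf 0 d)"
        by (simp add: inf.commute inf_sup_distrib_lg)
      also have "\<dots> = sup (inf (1 - real n *\<^sub>R d) d) 0" using d0 by (simp add: inf_absorb1)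
      also have "inf (1 - real n *\<^sub>R d) d \<le> t *\<^sub>R (1 - real n *\<^sub>R d) + (1 - t) *\<^sub>R d"
        by (rule inf_le_convex) (use t in auto)
      also have "t *\<^sub>R (1 - real n *\<^sub>R d) + (1 - t) *\<^sub>R d = t *\<^sub>R (1::'a)"
      proof -
        have e: "t *\<^sub>R d + (t * real n) *\<^sub>R d = d" using t(3) by (metis scaleR_add_left scaleR_one add_diff_cancel_left' diff_add_cancel)
        show ?thesis using e by (simp add: algebra_simps)
      qed
      finally have "inf g d \<le> sup (t *\<^sub>R 1) 0" by (meson order_refl sup_mono)
      also have "sup (t *\<^sub>R (1::'a)) 0 = t *\<^sub>R 1"
        using bal_scaleR_nonneg[of t "1::'a"] t bal_one_ge0 by (intro sup_absorb1) simp
      finally have "inf g d \<le> t *\<^sub>R 1" .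
      hence "real (Suc n) *\<^sub>R inf g d \<le> real (Suc n) *\<^sub>R (t *\<^sub>R 1)"
        by (rule bal_scaleR_mono[rotated]) simp
      thus ?thesis by (simp add: t_def)
    qed
    hence "inf g d \<le> 0" using bal_arch2[OF bal_one_ge0] by blast
    moreover have "0 \<le> inf g d" using g0 d0 by simp
    ultimately show ?thesis by simp
  qed
  have disj: "y * f = 0" if y0: "0 \<le> y" and yd: "inf y d = 0" for y
  proof -
    have "inf y (inf (real n *\<^sub>R d) 1) = 0" for n
    proof -
      have "inf y ((real n *\<^sub>R 1) * d) = 0"
        by (rule bal_disj_scale2[OF yd]) (simp add: bal_scaleR_nonneg bal_one_ge0)
      hence a: "inf y (real n *\<^sub>R d) = 0" by simp
      have b: "0 \<le> inf y (inf (real n *\<^sub>R d) 1)"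
        using y0 d0 bal_one_ge0 bal_scaleR_nonneg[of "real n" d] by simp
      have c: "inf y (inf (real n *\<^sub>R d) 1) \<le> inf y (real n *\<^sub>R d)"
        by (meson inf_mono order_refl inf.cobounded1)
      show ?thesis using a b c by (metis order.antisym)
    qed
    moreover have "is_join ((\<lambda>s. inf y s) ` X) (inf y f)" by (rule join_inf_distrib[OF f])
    ultimately have "inf y f \<le> 0" unfolding is_join_def X_def by auto
    moreover have "0 \<le> inf y f" using y0 f0 by simp
    ultimately have "inf y f = 0" by simp
    thus ?thesis by (rule bal_disj_mult)
  qed
  have gf: "g * f = 0" using disj[OF g0 gd] .
  have ff: "f * f = f"
  proof -
    have "f = f * (f + g)" by (simp add: g_def)
    also have "\<dots> = f * f" using gf by (simp add: algebra_simps)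
    finally show ?thesis by simp
  qed
  have df: "d * f = d"
  proof -
    have dg: "d * g = 0" by (rule bal_disj_mult) (metis gd inf.commute)
    have "d = d * (f + g)" by (simp add: g_def)
    also have "\<dots> = d * f" using dg by (simp add: algebra_simps)
    finally show ?thesis by simp
  qed
  have nz: "f \<noteq> 0" if "d \<noteq> 0"
  proof
    assume "f = 0"
    hence "inf d 1 \<le> 0" using hx[of 1] by simp
    hence i: "inf d 1 = 0" using d0 bal_one_ge0 by (meson order.antisym le_inf_iff)
    obtain N where N: "N \<ge> 1" "d \<le> N *\<^sub>R 1" using bal_bound[of d] by blast
    have "inf d ((N *\<^sub>R 1) * 1) = 0"
      by (rule bal_disj_scale2[OF i]) (use N in \<open>simp add: bal_scaleR_nonneg bal_one_ge0\<close>)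
    hence "d = 0" using N by (simp add: inf_absorb1)
    thus False using that by simp
  qed
  show ?thesis using ff df disj nz by blast
qed


definition batom :: "'a::basic \<Rightarrow> bool" where
  "batom q \<longleftrightarrow> q * q = q \<and> q \<noteq> 0 \<and> (\<forall>f. f * f = f \<and> f * q = f \<longrightarrow> f = 0 \<or> f = q)"

lemma batom_ge0: "batom q \<Longrightarrow> 0 \<le> q"
  unfolding batom_def using bal_idem_range by blast

lemma batom_le1: "batom q \<Longrightarrow> q \<le> 1"
  unfolding batom_def using bal_idem_range by blast

lemma batom_below:
  fixes d :: "'a::basic"
  assumes d0: "0 \<le> d" and dn: "d \<noteq> 0"
  shows "\<exists>q. batom q \<and> q * d \<noteq> 0"
proof -
  obtain f where f: "f * f = f" "d * f = d" "\<And>y. 0 \<le> y \<Longrightarrow> inf y d = 0 \<Longrightarrow> y * f = 0" "f \<noteq> 0"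
    using basic_band[OF d0] dn by blast
  obtain a where a: "a * a = a" "a \<noteq> 0" "\<forall>g. g * g = g \<and> g * a = g \<longrightarrow> g = 0 \<or> g = a" "a * f = a"
    using basic_idem_atomic[OF f(1) f(4)] by blast
  have at: "batom a" unfolding batom_def using a by blast
  have "a * d \<noteq> 0"
  proof
    assume ad: "a * d = 0"
    have a0: "0 \<le> a" and a1: "0 \<le> 1 - a" using bal_idem_range[OF a(1)] by auto
    let ?i = "inf a d"
    have i0: "0 \<le> ?i" using a0 d0 by simp
    have "a * ?i \<le> a * d" by (rule bal_mult_left_mono[OF a0]) simp
    moreover have "0 \<le> a * ?i" by (rule bal_mult_nonneg[OF a0 i0])
    ultimately have 1: "a * ?i = 0" using ad by simp
    have "(1 - a) * ?i \<le> (1 - a) * a" by (rule bal_mult_left_mono[OF a1]) simp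
    moreover have "(1 - a) * a = 0" using a(1) by (simp add: algebra_simps)
    moreover have "0 \<le> (1 - a) * ?i" by (rule bal_mult_nonneg[OF a1 i0])
    ultimately have 2: "(1 - a) * ?i = 0" by simp
    have "?i = a * ?i + (1 - a) * ?i" by (simp add: algebra_simps)
    hence "?i = 0" using 1 2 by simp
    hence "a * f = 0" using f(3)[OF a0] by simp
    thus False using a by simp
  qed
  thus ?thesis using at by blast
qed

lemma batom_exists: "\<exists>q::'a::basic. batom q"
proof -
  obtain q::'a where "batom q \<and> q * 1 \<noteq> 0" using batom_below[of "1::'a"] bal_one_ge0 by force
  thus ?thesis by blast
qed

lemma batom_idem_cases: "batom q \<Longrightarrow> f * f = f \<Longrightarrow> (q * f = 0 \<or> q * f = q)"
proof -
  assume q: "batom q" and f: "f * f = f"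
  have qq: "q * q = q" using q unfolding batom_def by blast
  have "(q * f) * (q * f) = (q * q) * (f * f)" by (simp add: algebra_simps)
  hence "(q * f) * (q * f) = q * f" using qq f by simp
  moreover have "(q * f) * q = (q * q) * f" by (simp add: algebra_simps)
  hence "(q * f) * q = q * f" using qq by simp
  moreover have "\<forall>g. g * g = g \<and> g * q = g \<longrightarrow> g = 0 \<or> g = q" using q unfolding batom_def by blast
  ultimately show ?thesis by blast
qed

lemma batom_total:
  fixes y :: "'a::basic"
  assumes q: "batom q"
  shows "0 \<le> q * y \<or> q * y \<le> 0"
proof -
  let ?p = "pprt y" and ?n = "- nprt y"
  have y: "y = ?p - ?n" by (subst diff_minus_eq_add) (rule prts)
  have p0: "0 \<le> ?p" by (rule zero_le_pprt)
  have n0: "0 \<le> ?n" using nprt_le_zero[of y] by (simp only: neg_0_le_iff_le)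
  have q0: "0 \<le> q" by (rule batom_ge0[OF q])
  obtain f where f0: "f * f = f \<and> ?p * f = ?p \<and> (\<forall>z. 0 \<le> z \<longrightarrow> inf z ?p = 0 \<longrightarrow> z * f = 0) \<and> (?p \<noteq> 0 \<longrightarrow> f \<noteq> 0)"
    using basic_band[OF p0] by (rule exE)
  have f: "f * f = f" "?p * f = ?p" "\<And>z. 0 \<le> z \<Longrightarrow> inf z ?p = 0 \<Longrightarrow> z * f = 0"
    using f0 by auto
  have qy: "q * y = q * ?p - q * ?n" using arg_cong[OF y, of "\<lambda>z. q * z"] by (simp only: right_diff_distrib)
  show ?thesis
  proof (cases "q * f = 0")
    case True
    have "q * ?p = q * (?p * f)" using f(2) by simp
    hence "q * ?p = (q * f) * ?p" by (simp add: algebra_simps)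
    hence "q * ?p = 0" using True by simp
    hence "q * y = - (q * ?n)" using qy by simp
    moreover have "0 \<le> q * ?n" by (rule bal_mult_nonneg[OF q0 n0])
    ultimately show ?thesis by simp
  next
    case False
    hence qf: "q * f = q" using batom_idem_cases[OF q f(1)] by blast
    have "inf ?n ?p = 0" using bal_pprt_nprt_disj[of y] by (simp add: inf.commute)
    hence "?n * f = 0" using f(3)[OF n0] by blast
    hence "q * (?n * f) = 0" by simp
    hence "(q * f) * ?n = 0" by (simp add: algebra_simps)
    hence "q * ?n = 0" using qf by simp
    hence "q * y = q * ?p" using qy by simp
    moreover have "0 \<le> q * ?p" by (rule bal_mult_nonneg[OF q0 p0])
    ultimately show ?thesis by simp
  qed
qed

lemma batom_scale_cancel: "batom q \<Longrightarrow> r *\<^sub>R q = s *\<^sub>R q \<Longrightarrow> r = s"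
proof -
  assume q: "batom q" and e: "r *\<^sub>R q = s *\<^sub>R q"
  have "q \<noteq> 0" using q unfolding batom_def by blast
  thus "r = s" using e scaleR_cancel_right by blast
qed

lemma batom_scale_le: "batom q \<Longrightarrow> r *\<^sub>R q \<le> s *\<^sub>R q \<Longrightarrow> r \<le> s"
proof (rule ccontr)
  assume q: "batom q" and le: "r *\<^sub>R q \<le> s *\<^sub>R q" and "\<not> r \<le> s"
  hence "s \<le> r" by simp
  hence "s *\<^sub>R q \<le> r *\<^sub>R q" by (rule bal_scaleR_mono2[OF _ batom_ge0[OF q]])
  hence "r *\<^sub>R q = s *\<^sub>R q" by (rule order.antisym[OF le])
  hence "r = s" by (rule batom_scale_cancel[OF q])
  thus False using \<open>\<not> r \<le> s\<close> by simp
qed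

lemma batom_real:
  fixes c :: "'a::basic"
  assumes q: "batom q"
  shows "\<exists>r. q * c = r *\<^sub>R q"
proof -
  have q0: "0 \<le> q" by (rule batom_ge0[OF q])
  obtain N where N: "N \<ge> 1" "c \<le> N *\<^sub>R 1" "- (N *\<^sub>R 1) \<le> c" using bal_bound[of c] by blast
  define K where "K = {s::real. s *\<^sub>R q \<le> q * c}"
  have qcN: "q * c \<le> N *\<^sub>R q" using bal_mult_left_mono[OF q0 N(2)] by simp
  have "q * (- (N *\<^sub>R 1)) \<le> q * c" by (rule bal_mult_left_mono[OF q0 N(3)])
  hence mN: "-N \<in> K" unfolding K_def by simp
  have Kb: "s \<le> N" if "s \<in> K" for s
  proof -
    have "s *\<^sub>R q \<le> q * c" using that unfolding K_def by simp
    hence "s *\<^sub>R q \<le> N *\<^sub>R q" using qcN by (rule order.trans)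
    thus ?thesis by (rule batom_scale_le[OF q])
  qed
  have bdd: "bdd_above K" by (rule bdd_aboveI[where M=N]) (rule Kb)
  have Kne: "K \<noteq> {}" using mN by blast
  define r where "r = Sup K"
  have lower: "r *\<^sub>R q - q * c \<le> 0"
  proof (rule bal_arch2[OF q0])
    fix n :: nat
    define t where "t = 1 / real (Suc n)"
    have t0: "0 < t" by (simp add: t_def)
    obtain s where s: "s \<in> K" "r - t < s" using less_cSup_iff[OF Kne bdd, of "r - t"] t0
      unfolding r_def by auto
    have "r *\<^sub>R q \<le> (s + t) *\<^sub>R q" by (rule bal_scaleR_mono2[OF _ q0]) (use s in simp)
    also have "\<dots> = s *\<^sub>R q + t *\<^sub>R q" by (simp add: scaleR_add_left)
    also have "\<dots> \<le> q * c + t *\<^sub>R q" using s(1) unfolding K_def by simp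
    finally have "r *\<^sub>R q - q * c \<le> t *\<^sub>R q" by (simp add: algebra_simps)
    hence "real (Suc n) *\<^sub>R (r *\<^sub>R q - q * c) \<le> real (Suc n) *\<^sub>R (t *\<^sub>R q)"
      by (rule bal_scaleR_mono[rotated]) simp
    thus "real (Suc n) *\<^sub>R (r *\<^sub>R q - q * c) \<le> q" by (simp add: t_def)
  qed
  have upper: "q * c - r *\<^sub>R q \<le> 0"
  proof (rule bal_arch2[OF q0])
    fix n :: nat
    define t where "t = 1 / real (Suc n)"
    have t0: "0 < t" by (simp add: t_def)
    have "r + t \<notin> K"
    proof
      assume "r + t \<in> K"
      hence "r + t \<le> r" unfolding r_def by (rule cSup_upper[OF _ bdd])
      thus False using t0 by simp
    qed
    hence nle: "\<not> (r + t) *\<^sub>R q \<le> q * c" unfolding K_def by simp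
    have "q * (c - (r + t) *\<^sub>R 1) = q * c - (r + t) *\<^sub>R q" by (simp add: algebra_simps)
    hence "q * c - (r + t) *\<^sub>R q \<le> 0" using batom_total[OF q, of "c - (r + t) *\<^sub>R 1"] nle by auto
    hence "q * c - r *\<^sub>R q \<le> t *\<^sub>R q" by (simp add: algebra_simps)
    hence "real (Suc n) *\<^sub>R (q * c - r *\<^sub>R q) \<le> real (Suc n) *\<^sub>R (t *\<^sub>R q)"
      by (rule bal_scaleR_mono[rotated]) simp
    thus "real (Suc n) *\<^sub>R (q * c - r *\<^sub>R q) \<le> q" by (simp add: t_def)
  qed
  have "q * c = r *\<^sub>R q" using lower upper by (simp add: order.antisym)
  thus ?thesis by blast
qed


definition phi :: "'a::basic \<Rightarrow> 'a \<Rightarrow> real" where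
  "phi q c = (THE r. q * c = r *\<^sub>R q)"

lemma phi_eq: "batom q \<Longrightarrow> q * c = phi q c *\<^sub>R q"
proof -
  assume q: "batom q"
  obtain r where r: "q * c = r *\<^sub>R q" using batom_real[OF q] by blast
  have "(THE r. q * c = r *\<^sub>R q) = r"
    by (rule the_equality[where P="\<lambda>r. q * c = r *\<^sub>R q", OF r]) (use r batom_scale_cancel[OF q] in metis)
  thus ?thesis using r unfolding phi_def by simp
qed

lemma phi_unique: "batom q \<Longrightarrow> q * c = r *\<^sub>R q \<Longrightarrow> phi q c = r"
  using phi_eq batom_scale_cancel by metis

context
  fixes q :: "'a::basic"
  assumes q: "batom q"
begin

lemma phi_add: "phi q (a + b) = phi q a + phi q b"
  by (rule phi_unique[OF q]) (simp add: distrib_left phi_eq[OF q] scaleR_add_left)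

lemma phi_scaleR: "phi q (r *\<^sub>R a) = r * phi q a"
  by (rule phi_unique[OF q]) (simp add: phi_eq[OF q, of a])

lemma phi_minus: "phi q (- a) = - phi q a"
  by (rule phi_unique[OF q]) (simp add: phi_eq[OF q, of a])

lemma phi_diff: "phi q (a - b) = phi q a - phi q b"
  using phi_add[of a "-b"] phi_minus[of b] by simp

lemma phi_one: "phi q 1 = 1"
  by (rule phi_unique[OF q]) simp

lemma phi_zero: "phi q 0 = 0"
  by (rule phi_unique[OF q]) simp

lemma phi_self: "phi q q = 1"
  by (rule phi_unique[OF q]) (use q in \<open>simp add: batom_def\<close>)

lemma phi_const: "phi q (r *\<^sub>R 1) = r"
  using phi_scaleR[of r 1] phi_one by simp

lemma phi_mult: "phi q (a * b) = phi q a * phi q b"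
proof (rule phi_unique[OF q])
  have qq: "q * q = q" using q by (simp add: batom_def)
  have "q * (a * b) = (q * a) * (q * b)" using qq by (metis mult.assoc mult.commute)
  also have "\<dots> = (phi q a * phi q b) *\<^sub>R (q * q)" by (simp add: phi_eq[OF q])
  finally show "q * (a * b) = (phi q a * phi q b) *\<^sub>R q" using qq by simp
qed

lemma phi_nonneg: "0 \<le> a \<Longrightarrow> 0 \<le> phi q a"
proof -
  assume a: "0 \<le> a"
  have "0 \<le> q * a" by (rule bal_mult_nonneg[OF batom_ge0[OF q] a])
  hence "0 *\<^sub>R q \<le> phi q a *\<^sub>R q" by (simp add: phi_eq[OF q])
  thus ?thesis by (rule batom_scale_le[OF q])
qed

lemma phi_mono: "a \<le> b \<Longrightarrow> phi q a \<le> phi q b"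
  using phi_nonneg[of "b - a"] phi_diff by simp

lemma phi_pprt: "phi q (pprt x) = max (phi q x) 0"
proof -
  have pn: "pprt x * (- nprt x) = 0" by (rule bal_disj_mult[OF bal_pprt_nprt_disj])
  hence m: "phi q (pprt x) * phi q (- nprt x) = 0" using phi_mult phi_zero by metis
  have d: "phi q (pprt x) - phi q (- nprt x) = phi q x"
    using prts[of x] phi_diff[of "pprt x" "- nprt x"] by simp
  have "0 \<le> phi q (pprt x)" by (rule phi_nonneg) simp
  moreover have "0 \<le> phi q (- nprt x)" by (rule phi_nonneg) simp
  ultimately show ?thesis using m d by (auto simp: max_def)
qed

lemma sup_pprt: "sup a b = a + pprt (b - (a::'b::lattice_ab_group_add))"
  by (simp add: pprt_def add_sup_distrib_left sup.commute)

lemma phi_sup: "phi q (sup a b) = max (phi q a) (phi q b)"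
  using phi_add phi_pprt phi_diff sup_pprt[of a b] by (simp add: max_def)

lemma phi_inf: "phi q (inf a b) = min (phi q a) (phi q b)"
proof -
  have e: "inf a b = a + b - sup a b" using add_eq_inf_sup[of a b] by (metis add_diff_cancel_left')
  have "phi q (inf a b) = phi q a + phi q b - phi q (sup a b)" by (subst e) (simp only: phi_diff phi_add)
  thus ?thesis by (simp add: phi_sup max_def min_def)
qed

end

lemma phi_other: "batom q \<Longrightarrow> batom q' \<Longrightarrow> q \<noteq> q' \<Longrightarrow> phi q q' = 0"
proof -
  assume q: "batom q" and q': "batom q'" and ne: "q \<noteq> q'"
  have 1: "q * q' = 0 \<or> q * q' = q" using batom_idem_cases[OF q] q' by (simp add: batom_def)
  have 2: "q' * q = 0 \<or> q' * q = q'" using batom_idem_cases[OF q'] q by (simp add: batom_def)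
  have "q * q' = 0" using 1 2 ne q by (metis mult.commute batom_def)
  thus ?thesis by (intro phi_unique[OF q]) simp
qed

lemma phi_sep:
  fixes a b :: "'a::basic"
  assumes "\<And>q. batom q \<Longrightarrow> phi q a \<le> phi q b"
  shows "a \<le> b"
proof -
  let ?x = "pprt (a - b)"
  have "q * ?x = 0" if q: "batom q" for q
  proof -
    have "phi q ?x = 0" using phi_pprt[OF q] phi_diff[OF q] assms[OF q] by simp
    thus ?thesis using phi_eq[OF q, of ?x] by simp
  qed
  hence "?x = 0" using batom_below[of ?x] by auto
  thus ?thesis using le_zero_iff_zero_pprt[of "a - b"] by simp
qed

lemma phi_ext: "(\<And>q. batom q \<Longrightarrow> phi q a = phi q (b::'a::basic)) \<Longrightarrow> a = b"
  by (rule order.antisym) (rule phi_sep; simp)+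

lemma join_phi:
  fixes x :: "'a::basic"
  assumes j: "is_join S x" and q: "batom q"
  shows "is_join (phi q ` S) (phi q x)"
  unfolding is_join_def
proof safe
  fix s assume "s \<in> S" thus "phi q s \<le> phi q x" using j unfolding is_join_def by (simp add: phi_mono[OF q])
next
  fix t assume t: "\<forall>v\<in>phi q ` S. v \<le> t"
  show "phi q x \<le> t"
  proof (rule ccontr)
    assume "\<not> phi q x \<le> t"
    define y where "y = x - (phi q x - t) *\<^sub>R q"
    have "s \<le> y" if s: "s \<in> S" for s
    proof (rule phi_sep)
      fix q' :: 'a assume q': "batom q'"
      have sx: "phi q' s \<le> phi q' x" using j s unfolding is_join_def by (simp add: phi_mono[OF q'])
      show "phi q' s \<le> phi q' y"
      proof (cases "q' = q")
        case True
        have "phi q y = t" unfolding y_def using phi_diff[OF q] phi_scaleR[OF q] phi_self[OF q] by simp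
        thus ?thesis using True t s by auto
      next
        case False
        have "phi q' y = phi q' x" unfolding y_def
          using phi_diff[OF q'] phi_scaleR[OF q'] phi_other[OF q' q False] by simp
        thus ?thesis using sx by simp
      qed
    qed
    hence "x \<le> y" using j unfolding is_join_def by blast
    hence "phi q x \<le> phi q y" by (rule phi_mono[OF q])
    also have "phi q y = t" unfolding y_def using phi_diff[OF q] phi_scaleR[OF q] phi_self[OF q] by simp
    finally show False using \<open>\<not> phi q x \<le> t\<close> by simp
  qed
qed

lemma phi_join:
  fixes x :: "'a::basic"
  assumes "\<And>q. batom q \<Longrightarrow> is_join (phi q ` S) (phi q x)"
  shows "is_join S x"
  unfolding is_join_def
proof safe
  fix s assume s: "s \<in> S"
  show "s \<le> x" by (rule phi_sep) (use assms s in \<open>auto simp: is_join_def\<close>)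
next
  fix y assume y: "\<forall>s\<in>S. s \<le> y"
  show "x \<le> y"
  proof (rule phi_sep)
    fix q :: 'a assume q: "batom q"
    have "\<forall>v\<in>phi q ` S. v \<le> phi q y" using y phi_mono[OF q] by auto
    thus "phi q x \<le> phi q y" using assms[OF q] unfolding is_join_def by blast
  qed
qed

lemma meet_phi:
  fixes x :: "'a::basic"
  assumes j: "is_meet S x" and q: "batom q"
  shows "is_meet (phi q ` S) (phi q x)"
  unfolding is_meet_def
proof safe
  fix s assume "s \<in> S" thus "phi q x \<le> phi q s" using j unfolding is_meet_def by (simp add: phi_mono[OF q])
next
  fix t assume t: "\<forall>v\<in>phi q ` S. t \<le> v"
  show "t \<le> phi q x"
  proof (rule ccontr)
    assume "\<not> t \<le> phi q x"
    define y where "y = x + (t - phi q x) *\<^sub>R q"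
    have "y \<le> s" if s: "s \<in> S" for s
    proof (rule phi_sep)
      fix q' :: 'a assume q': "batom q'"
      have sx: "phi q' x \<le> phi q' s" using j s unfolding is_meet_def by (simp add: phi_mono[OF q'])
      show "phi q' y \<le> phi q' s"
      proof (cases "q' = q")
        case True
        have "phi q y = t" unfolding y_def using phi_add[OF q] phi_scaleR[OF q] phi_self[OF q] by simp
        thus ?thesis using True t s by auto
      next
        case False
        have "phi q' y = phi q' x" unfolding y_def
          using phi_add[OF q'] phi_scaleR[OF q'] phi_other[OF q' q False] by simp
        thus ?thesis using sx by simp
      qed
    qed
    hence "y \<le> x" using j unfolding is_meet_def by blast
    hence "phi q y \<le> phi q x" by (rule phi_mono[OF q])
    also have "phi q y = t" unfolding y_def using phi_add[OF q] phi_scaleR[OF q] phi_self[OF q] by simp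
    finally show False using \<open>\<not> t \<le> phi q x\<close> by simp
  qed
qed

lemma phi_meet:
  fixes x :: "'a::basic"
  assumes "\<And>q. batom q \<Longrightarrow> is_meet (phi q ` S) (phi q x)"
  shows "is_meet S x"
  unfolding is_meet_def
proof safe
  fix s assume s: "s \<in> S"
  show "x \<le> s" by (rule phi_sep) (use assms s in \<open>auto simp: is_meet_def\<close>)
next
  fix y assume y: "\<forall>s\<in>S. y \<le> s"
  show "y \<le> x"
  proof (rule phi_sep)
    fix q :: 'a assume q: "batom q"
    have "\<forall>v\<in>phi q ` S. phi q y \<le> v" using y phi_mono[OF q] by auto
    thus "phi q y \<le> phi q x" using assms[OF q] unfolding is_meet_def by blast
  qed
qed

lemma phi_bound: "\<exists>N. \<forall>q. batom q \<longrightarrow> \<bar>phi q (x::'a::basic)\<bar> \<le> N"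
proof -
  obtain N where N: "N \<ge> 1" "x \<le> N *\<^sub>R 1" "- (N *\<^sub>R 1) \<le> x" using bal_bound[of x] by blast
  have "\<bar>phi q x\<bar> \<le> N" if q: "batom q" for q
    using phi_mono[OF q N(2)] phi_mono[OF q N(3)] phi_const[OF q] phi_minus[OF q] by (simp add: abs_le_iff)
  thus ?thesis by blast
qed

lemma realize:
  fixes r :: "'a::basic \<Rightarrow> real"
  assumes b: "\<And>q. batom q \<Longrightarrow> \<bar>r q\<bar> \<le> N"
  shows "\<exists>c::'a. \<forall>q. batom q \<longrightarrow> phi q c = r q"
proof -
  obtain q0 :: 'a where q0: "batom q0" using batom_exists by blast
  have N0: "0 \<le> N" using b[OF q0] by simp
  define U where "U = (\<lambda>q'. r q' *\<^sub>R q' - N *\<^sub>R (1 - q')) ` {q'. batom q'}"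
  have "U \<noteq> {}" unfolding U_def using q0 by blast
  moreover have "\<exists>u. \<forall>s\<in>U. s \<le> u"
  proof (intro exI[of _ "N *\<^sub>R 1"] ballI)
    fix s assume "s \<in> U"
    then obtain q' where q': "batom q'" and s: "s = r q' *\<^sub>R q' - N *\<^sub>R (1 - q')" unfolding U_def by blast
    have "r q' *\<^sub>R q' \<le> N *\<^sub>R q'" by (rule bal_scaleR_mono2) (use b[OF q'] batom_ge0[OF q'] in auto)
    also have "\<dots> \<le> N *\<^sub>R 1" by (rule bal_scaleR_mono[OF N0 batom_le1[OF q']])
    finally have 1: "r q' *\<^sub>R q' \<le> N *\<^sub>R 1" .
    have "0 \<le> N *\<^sub>R (1 - q')" by (rule bal_scaleR_nonneg[OF N0]) (use batom_le1[OF q'] in simp)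
    thus "s \<le> N *\<^sub>R 1" using 1 s by (metis add_increasing2 diff_le_eq)
  qed
  ultimately obtain c where c: "is_join U c" using basic_dedekind_complete' by blast
  have "phi q c = r q" if q: "batom q" for q
  proof -
    have J: "is_join (phi q ` U) (phi q c)" by (rule join_phi[OF c q])
    have vals: "phi q u = r q \<or> phi q u = - N" if "u \<in> U" for u
    proof -
      obtain q' where q': "batom q'" and u: "u = r q' *\<^sub>R q' - N *\<^sub>R (1 - q')" using \<open>u \<in> U\<close> unfolding U_def by blast
      have e: "phi q u = r q' * phi q q' - N * (1 - phi q q')"
        unfolding u using phi_diff[OF q] phi_scaleR[OF q] phi_one[OF q] by simp
      show ?thesis
      proof (cases "q' = q")
        case True thus ?thesis using e phi_self[OF q] by simp
      next
        case False thus ?thesis using e phi_other[OF q q'] by auto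
      qed
    qed
    have mem: "r q \<in> phi q ` U"
    proof -
      have "q \<in> {q'. batom q'}" using q by simp
      hence "r q *\<^sub>R q - N *\<^sub>R (1 - q) \<in> U" unfolding U_def by blast
      moreover have "phi q (r q *\<^sub>R q - N *\<^sub>R (1 - q)) = r q"
        using phi_diff[OF q] phi_scaleR[OF q] phi_one[OF q] phi_self[OF q] by simp
      ultimately show ?thesis by (metis image_eqI)
    qed
    have "is_join (phi q ` U) (r q)" unfolding is_join_def
    proof safe
      fix u assume "u \<in> U" thus "phi q u \<le> r q" using vals[of u] b[OF q] by auto
    next
      fix y assume "\<forall>s\<in>phi q ` U. s \<le> y" thus "r q \<le> y" using mem by blast
    qed
    thus ?thesis using J join_unique by metis
  qed
  thus ?thesis by blast
qed


lemma basic_meet_exists: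
  fixes S :: "'a::basic set"
  assumes "S \<noteq> {}" "\<exists>l. \<forall>s\<in>S. l \<le> s"
  shows "\<exists>x. is_meet S x"
proof -
  obtain l where l: "\<forall>s\<in>S. l \<le> s" using assms by blast
  have "uminus ` S \<noteq> {}" using assms(1) by simp
  moreover have "\<forall>s\<in>uminus ` S. s \<le> - l" using l by simp
  hence "\<exists>u. \<forall>s\<in>uminus ` S. s \<le> u" by blast
  ultimately have "\<exists>y. is_join (uminus ` S) y" by (rule basic_dedekind_complete')
  then obtain y where y: "is_join (uminus ` S) y" by (rule exE)
  have "is_meet S (- y)" unfolding is_meet_def
  proof safe
    fix s assume "s \<in> S" hence "- s \<le> y" using y unfolding is_join_def by blast
    thus "- y \<le> s" by (metis minus_le_iff)
  next
    fix z assume z: "\<forall>s\<in>S. z \<le> s"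
    have "\<forall>v\<in>uminus ` S. v \<le> - z" using z by simp
    hence "y \<le> - z" using y unfolding is_join_def by blast
    thus "z \<le> - y" by (metis le_minus_iff)
  qed
  thus ?thesis by blast
qed

lemma no_join_empty: "\<not> is_join {} (x::'a::bal)"
proof
  assume "is_join {} x"
  hence "x \<le> x - 1" unfolding is_join_def by blast
  thus False using bal_one_ge0[where 'a='a] by (simp add: le_diff_eq)
qed

lemma no_meet_empty: "\<not> is_meet {} (x::'a::bal)"
proof
  assume "is_meet {} x"
  hence "x + 1 \<le> x" unfolding is_meet_def by blast
  thus False using bal_one_ge0[where 'a='a] by simp
qed

context
  fixes h :: "'a::bal \<Rightarrow> 'b::bal"
  assumes h: "bal_hom h"
begin

lemma hom_add: "h (a + b) = h a + h b" using h by (simp add: bal_hom_def)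
lemma hom_mult: "h (a * b) = h a * h b" using h by (simp add: bal_hom_def)
lemma hom_scaleR: "h (r *\<^sub>R a) = r *\<^sub>R h a" using h by (simp add: bal_hom_def)
lemma hom_one: "h 1 = 1" using h by (simp add: bal_hom_def)
lemma hom_sup: "h (sup a b) = sup (h a) (h b)" using h by (simp add: bal_hom_def)
lemma hom_inf: "h (inf a b) = inf (h a) (h b)" using h by (simp add: bal_hom_def)
lemma hom_zero: "h 0 = 0" using hom_scaleR[of 0 0] by simp
lemma hom_minus: "h (- a) = - h a" using hom_scaleR[of "-1" a] by simp
lemma hom_diff: "h (a - b) = h a - h b" using hom_add[of a "-b"] hom_minus[of b] by simp
lemma hom_const: "h (r *\<^sub>R 1) = r *\<^sub>R 1" using hom_scaleR hom_one by simp
lemma hom_mono: "a \<le> b \<Longrightarrow> h a \<le> h b"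
proof -
  assume "a \<le> b"
  hence "sup a b = b" by (rule sup_absorb2)
  hence "sup (h a) (h b) = h b" using hom_sup[of a b] by simp
  thus ?thesis by (simp add: le_iff_sup)
qed

lemma hom_refl: "inj h \<Longrightarrow> h a \<le> h b \<Longrightarrow> a \<le> b"
proof -
  assume i: "inj h" and le: "h a \<le> h b"
  have "h (sup a b) = h b" using hom_sup[of a b] le by (simp add: sup_absorb2)
  hence "sup a b = b" by (rule injD[OF i])
  thus ?thesis by (simp add: le_iff_sup)
qed

lemma hom_Inf_fin: "finite X \<Longrightarrow> X \<noteq> {} \<Longrightarrow> h (Inf_fin X) = Inf_fin (h ` X)"
proof (induction X rule: finite_ne_induct)
  case (singleton x) thus ?case by simp
next
  case (insert x F)
  thus ?case using hom_inf by (simp add: Inf_fin.insert)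
qed

end

lemma meet_Inf_fin: "finite X \<Longrightarrow> X \<noteq> {} \<Longrightarrow> is_meet X (Inf_fin X)"
  unfolding is_meet_def by (auto intro: Inf_fin.coboundedI Inf_fin.boundedI)

lemma point_exists:
  fixes e :: "'a::bal \<Rightarrow> 'b::basic" and \<chi> :: "'a \<Rightarrow> real"
  assumes ce: "canonical_extension e"
    and cadd: "\<And>a b. \<chi> (a + b) = \<chi> a + \<chi> b"
    and cscale: "\<And>r a. \<chi> (r *\<^sub>R a) = r * \<chi> a"
    and cone: "\<chi> 1 = 1"
    and csup: "\<And>a b. \<chi> (sup a b) = max (\<chi> a) (\<chi> b)"
    and cinf: "\<And>a b. \<chi> (inf a b) = min (\<chi> a) (\<chi> b)"
  shows "\<exists>p. batom p \<and> (\<forall>a. phi p (e a) = \<chi> a)"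
proof -
  have ce': "bal_hom e \<and> inj e \<and> (\<forall>x::'b. \<exists>\<S>::'a set set.
        (\<forall>S\<in>\<S>. \<exists>m. is_meet (e ` S) m) \<and>
        is_join {m. \<exists>S\<in>\<S>. is_meet (e ` S) m} x) \<and>
     (\<forall>(S::'a set) (T::'a set) (\<epsilon>::real) m j.
        \<epsilon> > 0 \<longrightarrow> is_meet (e ` S) m \<longrightarrow> is_join (e ` T) j \<longrightarrow> m + of_real \<epsilon> \<le> j \<longrightarrow>
        (\<exists>S' T' m' j'. finite S' \<and> S' \<subseteq> S \<and> finite T' \<and> T' \<subseteq> T \<and>
           is_meet (e ` S') m' \<and> is_join (e ` T') j' \<and> m' \<le> j'))"
    using ce unfolding canonical_extension_def .
  have eh: "bal_hom e" using ce' by (rule conjunct1)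
  have einj: "inj e" using ce' by (rule conjunct1[OF conjunct2])
  note compact = conjunct2[OF conjunct2[OF conjunct2[OF ce']]]
  have cmono: "\<chi> a \<le> \<chi> b" if "a \<le> b" for a b
  proof -
    have "\<chi> b = max (\<chi> a) (\<chi> b)" using csup[of a b] that by (simp add: sup_absorb2)
    thus ?thesis by simp
  qed
  have cconst: "\<chi> (r *\<^sub>R 1) = r" for r using cscale cone by simp
  have cdiff: "\<chi> (a - b) = \<chi> a - \<chi> b" for a b
    using cadd[of "a - b" b] by simp
  define S where "S = {a. 0 \<le> a \<and> a \<le> 1 \<and> \<chi> a = 1}"
  have oneS: "1 \<in> S" unfolding S_def using bal_one_ge0 cone by simp
  have Sinf: "inf a b \<in> S" if "a \<in> S" "b \<in> S" for a b
    using that cinf unfolding S_def by (auto simp: le_infI1)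
  have SInf: "Inf_fin X \<in> S" if "finite X" "X \<noteq> {}" "X \<subseteq> S" for X
    using that
  proof (induction X rule: finite_ne_induct)
    case (singleton x) thus ?case by simp
  next
    case (insert x F) thus ?case using Sinf by (simp add: Inf_fin.insert)
  qed
  have e0: "0 \<le> e s" if "s \<in> S" for s
    using hom_mono[OF eh, of 0 s] hom_zero[OF eh] that unfolding S_def by simp
  have "e ` S \<noteq> {}" using oneS by blast
  moreover have "\<exists>l. \<forall>s\<in>e ` S. l \<le> s" using e0 by blast
  ultimately have "\<exists>m. is_meet (e ` S) m" by (rule basic_meet_exists)
  then obtain m where m: "is_meet (e ` S) m" by (rule exE)
  have m0: "0 \<le> m" using m e0 unfolding is_meet_def by blast
  have mn0: "m \<noteq> 0"
  proof
    assume mz: "m = 0"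
    let ?h = "(1/2::real) *\<^sub>R (1::'a)"
    have jT: "is_join (e ` {?h}) (e ?h)" unfolding is_join_def by simp
    have le: "m + of_real (1/2) \<le> e ?h" using mz hom_const[OF eh] by (simp add: of_real_def)
    have half: "(0::real) < 1/2" by simp
    have "\<exists>S' T' m' j'. finite S' \<and> S' \<subseteq> S \<and> finite T' \<and> T' \<subseteq> {?h} \<and>
           is_meet (e ` S') m' \<and> is_join (e ` T') j' \<and> m' \<le> j'"
      by (rule compact[rule_format, OF half m jT le])
    then obtain S' T' m' j' where st: "finite S'" "S' \<subseteq> S" "finite T'" "T' \<subseteq> {?h}"
      "is_meet (e ` S') m'" "is_join (e ` T') j'" "m' \<le> j'" by blast
    have "T' \<noteq> {}" using st(6) no_join_empty by fastforce
    hence T': "T' = {?h}" using st(4) by blast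
    have j': "j' = e ?h" using st(6) jT T' join_unique by metis
    have "S' \<noteq> {}" using st(5) no_meet_empty by fastforce
    hence bS: "Inf_fin S' \<in> S" using SInf st(1,2) by blast
    have "is_meet (e ` S') (e (Inf_fin S'))"
      using hom_Inf_fin[OF eh st(1) \<open>S' \<noteq> {}\<close>] meet_Inf_fin[of "e ` S'"] st(1) \<open>S' \<noteq> {}\<close> by simp
    hence "m' = e (Inf_fin S')" using st(5) meet_unique by metis
    hence "e (Inf_fin S') \<le> e ?h" using st(7) j' by simp
    hence "Inf_fin S' \<le> ?h" by (rule hom_refl[OF eh einj])
    hence "\<chi> (Inf_fin S') \<le> 1/2" using cmono cconst by metis
    moreover have "\<chi> (Inf_fin S') = 1" using bS unfolding S_def by simp
    ultimately show False by simp
  qed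
  obtain p where p: "batom p" "p * m \<noteq> 0" using batom_below[OF m0 mn0] by blast
  define \<delta> where "\<delta> = phi p m"
  have \<delta>: "0 < \<delta>"
  proof -
    have "0 \<le> \<delta>" unfolding \<delta>_def by (rule phi_nonneg[OF p(1) m0])
    moreover have "\<delta> \<noteq> 0" using p phi_eq[OF p(1), of m] unfolding \<delta>_def by auto
    ultimately show ?thesis by simp
  qed
  define \<psi> where "\<psi> a = phi p (e a)" for a
  have psup: "\<psi> (sup a b) = max (\<psi> a) (\<psi> b)" for a b
    unfolding \<psi>_def using hom_sup[OF eh] phi_sup[OF p(1)] by simp
  have pinf: "\<psi> (inf a b) = min (\<psi> a) (\<psi> b)" for a b
    unfolding \<psi>_def using hom_inf[OF eh] phi_inf[OF p(1)] by simp
  have pdiff: "\<psi> (a - b) = \<psi> a - \<psi> b" for a b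
    unfolding \<psi>_def using hom_diff[OF eh] phi_diff[OF p(1)] by simp
  have pconst: "\<psi> (r *\<^sub>R 1) = r" for r
    unfolding \<psi>_def using hom_const[OF eh] phi_const[OF p(1)] by simp
  have p1: "\<psi> 1 = 1" using pconst[of 1] by simp
  have p0: "\<psi> 0 = 0" using pconst[of 0] by simp
  have pscale: "\<psi> (r *\<^sub>R a) = r * \<psi> a" for r a
    unfolding \<psi>_def using hom_scaleR[OF eh] phi_scaleR[OF p(1)] by simp
  have pminus: "\<psi> (- a) = - \<psi> a" for a
    using pdiff[of 0 a] pconst[of 0] by simp
  have cminus: "\<chi> (- a) = - \<chi> a" for a
    using cdiff[of 0 a] cconst[of 0] by simp
  have zero: "\<psi> a = 0" if ca: "\<chi> a = 0" for a
  proof (rule ccontr)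
    assume v0: "\<psi> a \<noteq> 0"
    define v where "v = max (\<psi> a) (- \<psi> a)"
    have v: "0 < v" using v0 unfolding v_def by auto
    obtain n :: nat where n: "1 / v < real n" using reals_Archimedean2 by blast
    define b where "b = inf (sup (1 - real n *\<^sub>R sup a (- a)) 0) (1::'a)"
    have "\<chi> b = 1" unfolding b_def using ca cinf csup cdiff cscale cone cminus cconst[of 0] by simp
    moreover have "0 \<le> b" unfolding b_def using bal_one_ge0 by simp
    moreover have "b \<le> 1" unfolding b_def by simp
    ultimately have "b \<in> S" unfolding S_def by simp
    hence "m \<le> e b" using m unfolding is_meet_def by blast
    hence "\<delta> \<le> \<psi> b" unfolding \<delta>_def \<psi>_def by (rule phi_mono[OF p(1)])
    also have "\<psi> b = min (max (1 - real n * v) 0) 1"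
      unfolding b_def v_def using pinf psup pdiff p1 p0 pminus pscale by simp
    finally have "\<delta> \<le> max (1 - real n * v) 0" by simp
    moreover have "1 < real n * v" using n v by (simp add: field_simps)
    ultimately show False using \<delta> by simp
  qed
  have "\<psi> a = \<chi> a" for a
  proof -
    have "\<chi> (a - \<chi> a *\<^sub>R 1) = 0" using cdiff cconst by simp
    hence "\<psi> (a - \<chi> a *\<^sub>R 1) = 0" by (rule zero)
    thus ?thesis using pdiff pconst by simp
  qed
  thus ?thesis using p(1) unfolding \<psi>_def by blast
qed


theorem theorem4p3:
  fixes e :: "'a::bal \<Rightarrow> 'b::basic"
  assumes "canonical_extension e"
  shows "\<forall>\<alpha> :: 'a \<Rightarrow> 'c::basic. bal_hom \<alpha> \<longrightarrow>
           (\<exists>!\<gamma> :: 'b \<Rightarrow> 'c. normal_hom \<gamma> \<and> \<gamma> \<circ> e = \<alpha>)"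
proof (intro allI impI)
  fix \<alpha> :: "'a \<Rightarrow> 'c::basic"
  assume ah: "bal_hom \<alpha>"
  have ce': "bal_hom e \<and> inj e \<and> (\<forall>x::'b. \<exists>\<S>::'a set set.
        (\<forall>S\<in>\<S>. \<exists>m. is_meet (e ` S) m) \<and>
        is_join {m. \<exists>S\<in>\<S>. is_meet (e ` S) m} x) \<and>
     (\<forall>(S::'a set) (T::'a set) (\<epsilon>::real) m j.
        \<epsilon> > 0 \<longrightarrow> is_meet (e ` S) m \<longrightarrow> is_join (e ` T) j \<longrightarrow> m + of_real \<epsilon> \<le> j \<longrightarrow>
        (\<exists>S' T' m' j'. finite S' \<and> S' \<subseteq> S \<and> finite T' \<and> T' \<subseteq> T \<and>
           is_meet (e ` S') m' \<and> is_join (e ` T') j' \<and> m' \<le> j'))"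
    using assms unfolding canonical_extension_def .
  have eh: "bal_hom e" using ce' by (rule conjunct1)
  have dens: "\<forall>x::'b. \<exists>\<S>::'a set set.
        (\<forall>S\<in>\<S>. \<exists>m. is_meet (e ` S) m) \<and>
        is_join {m. \<exists>S\<in>\<S>. is_meet (e ` S) m} x"
    using ce' by (rule conjunct1[OF conjunct2[OF conjunct2]])
  have pt: "\<exists>p. batom p \<and> (\<forall>a. phi p (e a) = phi q (\<alpha> a))" if q: "batom (q::'c)" for q
    by (rule point_exists[OF assms])
       (simp_all add: hom_add[OF ah] hom_scaleR[OF ah] hom_one[OF ah] hom_sup[OF ah] hom_inf[OF ah]
         phi_add[OF q] phi_scaleR[OF q] phi_one[OF q] phi_sup[OF q] phi_inf[OF q])
  define P where "P q = (SOME p. batom p \<and> (\<forall>a. phi p (e a) = phi q (\<alpha> a)))" for q :: 'c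
  have P: "batom (P q) \<and> (\<forall>a. phi (P q) (e a) = phi q (\<alpha> a))" if q: "batom q" for q
    unfolding P_def by (rule someI_ex[OF pt[OF q]])
  define \<gamma> where "\<gamma> x = (SOME c::'c. \<forall>q. batom q \<longrightarrow> phi q c = phi (P q) x)" for x
  have G: "phi q (\<gamma> x) = phi (P q) x" if q: "batom q" for q x
  proof -
    obtain N where N: "\<forall>p. batom p \<longrightarrow> \<bar>phi p x\<bar> \<le> N" using phi_bound[of x] by blast
    have "\<exists>c::'c. \<forall>q. batom q \<longrightarrow> phi q c = phi (P q) x"
      by (rule realize[of "\<lambda>q. phi (P q) x" N]) (use N P in blast)
    hence "\<forall>q. batom q \<longrightarrow> phi q (\<gamma> x) = phi (P q) x" unfolding \<gamma>_def by (rule someI_ex)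
    thus ?thesis using q by blast
  qed
  have gbal: "bal_hom \<gamma>" unfolding bal_hom_def
  proof (intro conjI allI)
    fix x y show "\<gamma> (x + y) = \<gamma> x + \<gamma> y"
      by (rule phi_ext) (simp add: G phi_add P)
  next
    fix x y show "\<gamma> (x * y) = \<gamma> x * \<gamma> y"
      by (rule phi_ext) (simp add: G phi_mult P)
  next
    fix r x show "\<gamma> (r *\<^sub>R x) = r *\<^sub>R \<gamma> x"
      by (rule phi_ext) (simp add: G phi_scaleR P)
  next
    show "\<gamma> 1 = 1"
      by (rule phi_ext) (simp add: G phi_one P)
  next
    fix x y show "\<gamma> (sup x y) = sup (\<gamma> x) (\<gamma> y)"
      by (rule phi_ext) (simp add: G phi_sup P)
  next
    fix x y show "\<gamma> (inf x y) = inf (\<gamma> x) (\<gamma> y)"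
      by (rule phi_ext) (simp add: G phi_inf P)
  qed
  have gimg: "phi q ` \<gamma> ` S = phi (P q) ` S" if q: "batom q" for q and S :: "'b set"
    using G[OF q] by (auto simp: image_image image_def)
  have gnormal: "normal_hom \<gamma>" unfolding normal_hom_def
  proof (intro conjI allI impI gbal)
    fix S :: "'b set" and x :: 'b assume j: "is_join S x"
    show "is_join (\<gamma> ` S) (\<gamma> x)"
    proof (rule phi_join)
      fix q :: 'c assume q: "batom q"
      show "is_join (phi q ` \<gamma> ` S) (phi q (\<gamma> x))"
        using join_phi[OF j conjunct1[OF P[OF q]]] gimg[OF q] G[OF q] by simp
    qed
  next
    fix S :: "'b set" and x :: 'b assume j: "is_meet S x"
    show "is_meet (\<gamma> ` S) (\<gamma> x)"
    proof (rule phi_meet)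
      fix q :: 'c assume q: "batom q"
      show "is_meet (phi q ` \<gamma> ` S) (phi q (\<gamma> x))"
        using meet_phi[OF j conjunct1[OF P[OF q]]] gimg[OF q] G[OF q] by simp
    qed
  qed
  have gcomp: "\<gamma> \<circ> e = \<alpha>"
  proof
    fix a show "(\<gamma> \<circ> e) a = \<alpha> a"
      by (simp, rule phi_ext) (simp add: G P)
  qed
  show "\<exists>!\<gamma> :: 'b \<Rightarrow> 'c. normal_hom \<gamma> \<and> \<gamma> \<circ> e = \<alpha>"
  proof (rule ex1I[of _ \<gamma>])
    show "normal_hom \<gamma> \<and> \<gamma> \<circ> e = \<alpha>" using gnormal gcomp by blast
  next
    fix \<gamma>' assume g': "normal_hom \<gamma>' \<and> \<gamma>' \<circ> e = \<alpha>"
    show "\<gamma>' = \<gamma>"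
    proof
      fix x :: 'b
      obtain \<S> where \<S>: "\<forall>S\<in>\<S>. \<exists>m. is_meet (e ` S) m" "is_join {m. \<exists>S\<in>\<S>. is_meet (e ` S) m} x"
        using dens by blast
      let ?M = "{m. \<exists>S\<in>\<S>. is_meet (e ` S) m}"
      have same: "\<gamma>' m = \<gamma> m" if "m \<in> ?M" for m
      proof -
        obtain S where S: "S \<in> \<S>" "is_meet (e ` S) m" using \<open>m \<in> ?M\<close> by blast
        have "is_meet (\<gamma>' ` e ` S) (\<gamma>' m)" using g' S(2) unfolding normal_hom_def by blast
        moreover have "is_meet (\<gamma> ` e ` S) (\<gamma> m)" using gnormal S(2) unfolding normal_hom_def by blast
        moreover have "\<gamma>' ` e ` S = \<gamma> ` e ` S"
        proof -
          have "\<gamma>' ` e ` S = (\<gamma>' \<circ> e) ` S" by (simp add: image_comp)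
          also have "\<dots> = (\<gamma> \<circ> e) ` S" using g' gcomp by simp
          also have "\<dots> = \<gamma> ` e ` S" by (simp add: image_comp)
          finally show ?thesis .
        qed
        ultimately show ?thesis using meet_unique by metis
      qed
      have "is_join (\<gamma>' ` ?M) (\<gamma>' x)" using g' \<S>(2) unfolding normal_hom_def by blast
      moreover have "is_join (\<gamma> ` ?M) (\<gamma> x)" using gnormal \<S>(2) unfolding normal_hom_def by blast
      moreover have "\<gamma>' ` ?M = \<gamma> ` ?M" using same by (auto simp: image_def)
      ultimately show "\<gamma>' x = \<gamma> x" using join_unique by metis
    qed
  qed
qed

end
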